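(* Let $p \geq 2$, let $\Omega \subset \mathbb{R}^d$ be open, and let $f: \Omega \to \mathbb{R}$ be a non-negative function of class $C^p$ with zero set $\mathcal{Z}$. The following statements are equivalent: (i) for all $x_0 \in \mathcal{Z}$, $f$ satisfies the normal Hessian condition at $x_0$; (ii) $\mathcal{Z}$ is a (not necessarily connected) sub-manifold of $\mathbb{R}^d$ of class $C^1$ and $f$ is positive normally to $\mathcal{Z}$; (iii) $\mathcal{Z}$ is a (not necessarily connected) sub-manifold of $\mathbb{R}^d$ of class $C^{p-1}$ and $f$ is positive normally to $\mathcal{Z}$.
   Context: A subset $N \subset \mathbb{R}^d$ is a sub-manifold of $\mathbb{R}^d$ of class $C^k$ ($k \geq 1$) if for every $x \in N$ there is an integer $d_x$, an open neighborhood $U$ of $0$ in $\mathbb{R}^{d_x}$, an open set $V \subset \mathbb{R}^d$ and a $C^k$ map $\phi: U \to \mathbb{R}^d$ with $\phi(0)=x$, $\phi(U) = N \cap V$, $\phi: U \to \phi(U)$ a homeomorphism, and $d\phi(0)$ injective; $d_x$ is the (local) dimension of $N$ at $x$ and $T_xN = d\phi(0)(\mathbb{R}^{d_x})$. Normal Hessian condition at $x_0 \in \mathcal{Z}$: there exist $0 \le d_0 \le d$ and a sub-manifold $N$ of class $C^k$, $k\ge 1$, of dimension $d_0$ with $x_0 \in N \subset \mathcal{Z}$ such that $\nabla^2 f(x_0)$ has rank $d-d_0$. For a sub-manifold $N \subset \Omega$ of class $C^k$, $k\ge 1$, $f$ is positive normally to $N$ if (a) $df(x) = 0$ for all $x \in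 N$, and (b) for every $x_0 \in N$, with $d_0$ the local dimension of $N$ at $x_0$, there exists a linear subspace $S \subset \mathbb{R}^d$ of dimension $d-d_0$ such that the restriction $d^2 f(x_0)|_S$ is positive definite. *)

theory Defs
  imports "HOL-Analysis.Analysis"
begin

text \<open>C^k on a set U that is relatively open in a linear subspace S (U \<subseteq> S).
  For S = UNIV and U open this is the usual class C^k.\<close>
fun Ck_on :: "('a::real_normed_vector) set \<Rightarrow> nat \<Rightarrow> 'a set \<Rightarrow> ('a \<Rightarrow> 'b::real_normed_vector) \<Rightarrow> bool" where
  "Ck_on S 0 U g = continuous_on U g"
| "Ck_on S (Suc k) U g =
     (\<exists>g'. (\<forall>x\<in>U. (g has_derivative g' x) (at x within U)) \<and> (\<forall>v\<in>S. Ck_on S k U (\<lambda>x. g' x v)))"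

text \<open>A local chart of N at x of class C^k: the parameter domain R^{d_x} is represented
  by a linear subspace S of R^d of dimension d_x, U is an open neighbourhood of 0 in S.\<close>
definition is_chart :: "nat \<Rightarrow> ('a::euclidean_space) set \<Rightarrow> 'a \<Rightarrow> 'a set \<Rightarrow> 'a set \<Rightarrow> 'a set \<Rightarrow> ('a \<Rightarrow> 'a) \<Rightarrow> bool" where
  "is_chart k N x S U V \<phi> \<longleftrightarrow>
     subspace S \<and> U \<subseteq> S \<and> openin (top_of_set S) U \<and> 0 \<in> U \<and> open V \<and>
     Ck_on S k U \<phi> \<and> \<phi> 0 = x \<and> \<phi> ` U = N \<inter> V \<and>
     (\<exists>\<psi>. homeomorphism U (\<phi> ` U) \<phi> \<psi>) \<and>
     (\<exists>\<phi>'. (\<phi> has_derivative \<phi>') (at 0 within U) \<and> inj_on \<phi>' S)"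

definition submanifold :: "nat \<Rightarrow> ('a::euclidean_space) set \<Rightarrow> bool" where
  "submanifold k N \<longleftrightarrow> (\<forall>x\<in>N. \<exists>S U V \<phi>. is_chart k N x S U V \<phi>)"

definition local_dim_is :: "nat \<Rightarrow> ('a::euclidean_space) set \<Rightarrow> 'a \<Rightarrow> nat \<Rightarrow> bool" where
  "local_dim_is k N x m \<longleftrightarrow> (\<exists>S U V \<phi>. is_chart k N x S U V \<phi> \<and> dim S = m)"

definition zero_set :: "'a set \<Rightarrow> ('a \<Rightarrow> real) \<Rightarrow> 'a set" where
  "zero_set \<Omega> f = {x\<in>\<Omega>. f x = 0}"

definition d2 :: "('a::real_normed_vector \<Rightarrow> real) \<Rightarrow> 'a \<Rightarrow> 'a \<Rightarrow> 'a \<Rightarrow> real" where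
  "d2 f x v w = frechet_derivative (\<lambda>y. frechet_derivative f (at y) v) (at x) w"

definition hessian :: "(real^'n \<Rightarrow> real) \<Rightarrow> real^'n \<Rightarrow> real^'n^'n" where
  "hessian f x = (\<chi> i j. d2 f x (axis i 1) (axis j 1))"

definition normal_hessian_at :: "(real^'n) set \<Rightarrow> (real^'n \<Rightarrow> real) \<Rightarrow> real^'n \<Rightarrow> bool" where
  "normal_hessian_at \<Omega> f x0 \<longleftrightarrow>
     (\<exists>d0 k N. d0 \<le> CARD('n) \<and> k \<ge> 1 \<and> submanifold k N \<and> (\<forall>y\<in>N. local_dim_is k N y d0) \<and>
        x0 \<in> N \<and> N \<subseteq> zero_set \<Omega> f \<and> rank (hessian f x0) = CARD('n) - d0)"

definition positive_normally :: "nat \<Rightarrow> ('a::euclidean_space \<Rightarrow> real) \<Rightarrow> 'a set \<Rightarrow> bool" where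
  "positive_normally k f N \<longleftrightarrow>
     (\<forall>x\<in>N. (f has_derivative (\<lambda>v. 0)) (at x)) \<and>
     (\<forall>x0\<in>N. \<forall>d0. local_dim_is k N x0 d0 \<longrightarrow>
        (\<exists>T. subspace T \<and> dim T = DIM('a) - d0 \<and> (\<forall>v\<in>T. v \<noteq> 0 \<longrightarrow> d2 f x0 v v > 0)))"

end

theory Submission
  imports Defs "HOL-Homology.Invariance_of_Domain"
begin


lemma CkI:
  assumes "\<And>x. x \<in> U \<Longrightarrow> (g has_derivative g' x) (at x within U)"
    and "\<And>v. v \<in> S \<Longrightarrow> Ck_on S k U (\<lambda>x. g' x v)"
  shows "Ck_on S (Suc k) U g"
  using assms by auto

lemma CkI2:
  "\<forall>x\<in>U. (g has_derivative g' x) (at x within U) \<Longrightarrow> \<forall>v\<in>S. Ck_on S k U (\<lambda>x. g' x v) \<Longrightarrow> Ck_on S (Suc k) U g"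
  by auto

lemma Ck_mono_Suc: "Ck_on S (Suc k) U g \<Longrightarrow> Ck_on S k U g"
proof (induction k arbitrary: g)
  case 0
  then show ?case by (auto intro: has_derivative_continuous_on)
next
  case (Suc k)
  from Suc.prems obtain g' where d: "\<forall>x\<in>U. (g has_derivative g' x) (at x within U)"
    and c: "\<forall>v\<in>S. Ck_on S (Suc k) U (\<lambda>x. g' x v)" by auto
  show ?case using d c Suc.IH by auto
qed

lemma Ck_mono: "Ck_on S k U g \<Longrightarrow> j \<le> k \<Longrightarrow> Ck_on S j U g"
proof (induction k)
  case 0 then show ?case by simp
next
  case (Suc k) then show ?case using Ck_mono_Suc by (metis le_Suc_eq)
qed

lemma Ck_restrict: "Ck_on S k U g \<Longrightarrow> S' \<subseteq> S \<Longrightarrow> U' \<subseteq> U \<Longrightarrow> Ck_on S' k U' g"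
proof (induction k arbitrary: g)
  case 0 then show ?case by (auto intro: continuous_on_subset)
next
  case (Suc k)
  from Suc.prems obtain g' where d: "\<forall>x\<in>U. (g has_derivative g' x) (at x within U)"
    and c: "\<forall>v\<in>S. Ck_on S k U (\<lambda>x. g' x v)" by auto
  have "\<forall>x\<in>U'. (g has_derivative g' x) (at x within U')"
    using d Suc.prems by (auto intro: has_derivative_subset)
  moreover have "\<forall>v\<in>S'. Ck_on S' k U' (\<lambda>x. g' x v)" using c Suc by auto
  ultimately show ?case by auto
qed

lemma Ck_cong: "Ck_on S k U g \<Longrightarrow> (\<And>x. x \<in> U \<Longrightarrow> g x = h x) \<Longrightarrow> Ck_on S k U h"
proof (induction k arbitrary: g h)
  case 0 then show ?case using continuous_on_cong by force
next
  case (Suc k)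
  from Suc.prems obtain g' where d: "\<forall>x\<in>U. (g has_derivative g' x) (at x within U)"
    and c: "\<forall>v\<in>S. Ck_on S k U (\<lambda>x. g' x v)" by auto
  show ?case
  proof (rule CkI)
    fix x assume x: "x \<in> U"
    show "(h has_derivative g' x) (at x within U)"
      by (rule has_derivative_transform[of x U h g]) (use x d Suc.prems in auto)
  qed (use c in auto)
qed

lemma Ck_const: "Ck_on S k U (\<lambda>x. c)"
proof (induction k arbitrary: c)
  case 0 then show ?case by simp
next
  case (Suc k)
  have "\<forall>x\<in>U. ((\<lambda>x. c) has_derivative (\<lambda>x v. 0) x) (at x within U)" by simp
  then show ?case by (rule CkI2) (use Suc in auto)
qed

lemma Ck_linear:
  assumes "bounded_linear L" "Ck_on S k U g"
  shows "Ck_on S k U (\<lambda>x. L (g x))"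
  using assms(2)
proof (induction k arbitrary: g)
  case 0 then show ?case
    using assms(1) linear_continuous_on_compose by (simp add: bounded_linear.continuous_on continuous_on_id)
next
  case (Suc k)
  from Suc.prems obtain g' where d: "\<forall>x\<in>U. (g has_derivative g' x) (at x within U)"
    and c: "\<forall>v\<in>S. Ck_on S k U (\<lambda>x. g' x v)" by auto
  have "\<forall>x\<in>U. ((\<lambda>x. L (g x)) has_derivative (\<lambda>v. L (g' x v))) (at x within U)"
    using d bounded_linear.has_derivative[OF assms(1)] by blast
  moreover have "\<forall>v\<in>S. Ck_on S k U (\<lambda>x. L (g' x v))" using c Suc.IH by auto
  ultimately show ?case by (rule CkI2)
qed

lemma Ck_id: "Ck_on S k U (\<lambda>x. x)"
proof (cases k)
  case 0 then show ?thesis by (simp add: continuous_on_id)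
next
  case (Suc j)
  have "\<forall>x\<in>U. ((\<lambda>x. x) has_derivative (\<lambda>x v. v) x) (at x within U)" by simp
  then show ?thesis unfolding Suc by (rule CkI2) (auto simp: Ck_const)
qed

lemma Ck_add:
  assumes "Ck_on S k U g" "Ck_on S k U h"
  shows "Ck_on S k U (\<lambda>x. g x + h x)"
  using assms
proof (induction k arbitrary: g h)
  case 0 then show ?case by (simp add: continuous_on_add)
next
  case (Suc k)
  from Suc.prems(1) obtain g' where d: "\<forall>x\<in>U. (g has_derivative g' x) (at x within U)"
    and c: "\<forall>v\<in>S. Ck_on S k U (\<lambda>x. g' x v)" by auto
  from Suc.prems(2) obtain h' where d2: "\<forall>x\<in>U. (h has_derivative h' x) (at x within U)"
    and c2: "\<forall>v\<in>S. Ck_on S k U (\<lambda>x. h' x v)" by auto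
  have "\<forall>x\<in>U. ((\<lambda>x. g x + h x) has_derivative (\<lambda>x v. g' x v + h' x v) x) (at x within U)"
    using d d2 by (auto intro: has_derivative_add)
  moreover have "\<forall>v\<in>S. Ck_on S k U (\<lambda>x. g' x v + h' x v)" using c c2 Suc.IH by auto
  ultimately show ?case by (rule CkI2)
qed

lemma Ck_sum:
  assumes "finite I" "\<And>i. i \<in> I \<Longrightarrow> Ck_on S k U (g i)"
  shows "Ck_on S k U (\<lambda>x. \<Sum>i\<in>I. g i x)"
  using assms
proof (induction I rule: finite_induct)
  case empty then show ?case using Ck_const by simp
next
  case (insert a I) then show ?case by (simp add: Ck_add)
qed

lemma Ck_scaleR:
  fixes a :: "'a::real_normed_vector \<Rightarrow> real" and b :: "'a \<Rightarrow> 'b::real_normed_vector"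
  assumes "Ck_on S k U a" "Ck_on S k U b"
  shows "Ck_on S k U (\<lambda>x. a x *\<^sub>R b x)"
  using assms
proof (induction k arbitrary: a b)
  case 0 then show ?case by (simp add: continuous_on_scaleR)
next
  case (Suc k)
  from Suc.prems(1) obtain a' where d: "\<forall>x\<in>U. (a has_derivative a' x) (at x within U)"
    and c: "\<forall>v\<in>S. Ck_on S k U (\<lambda>x. a' x v)" by auto
  from Suc.prems(2) obtain b' where d2: "\<forall>x\<in>U. (b has_derivative b' x) (at x within U)"
    and c2: "\<forall>v\<in>S. Ck_on S k U (\<lambda>x. b' x v)" by auto
  have ak: "Ck_on S k U a" "Ck_on S k U b"
    by (rule Ck_mono_Suc[OF Suc.prems(1)], rule Ck_mono_Suc[OF Suc.prems(2)])
  have "\<forall>x\<in>U. ((\<lambda>x. a x *\<^sub>R b x) has_derivative (\<lambda>x v. a x *\<^sub>R b' x v + a' x v *\<^sub>R b x) x) (at x within U)"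
    using d d2 by (auto intro: has_derivative_scaleR)
  moreover have "\<forall>v\<in>S. Ck_on S k U (\<lambda>x. a x *\<^sub>R b' x v + a' x v *\<^sub>R b x)"
    using c c2 ak Suc.IH by (auto intro!: Ck_add)
  ultimately show ?case by (rule CkI2)
qed

lemma Ck_mult:
  fixes a b :: "'a::real_normed_vector \<Rightarrow> real"
  assumes "Ck_on S k U a" "Ck_on S k U b"
  shows "Ck_on S k U (\<lambda>x. a x * b x)"
  using Ck_scaleR[OF assms] by simp

lemma Ck_prod:
  fixes g :: "'i \<Rightarrow> 'a::real_normed_vector \<Rightarrow> real"
  assumes "finite I" "\<And>i. i \<in> I \<Longrightarrow> Ck_on S k U (g i)"
  shows "Ck_on S k U (\<lambda>x. \<Prod>i\<in>I. g i x)"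
  using assms
proof (induction I rule: finite_induct)
  case empty then show ?case using Ck_const by simp
next
  case (insert a I) then show ?case by (simp add: Ck_mult)
qed

lemma Ck_inverse:
  fixes d :: "'a::real_normed_vector \<Rightarrow> real"
  assumes "Ck_on S k U d" "\<forall>x\<in>U. d x \<noteq> 0"
  shows "Ck_on S k U (\<lambda>x. inverse (d x))"
  using assms
proof (induction k arbitrary: d)
  case 0 then show ?case by (auto intro!: continuous_on_inverse)
next
  case (Suc k)
  from Suc.prems(1) obtain d' where dd: "\<forall>x\<in>U. (d has_derivative d' x) (at x within U)"
    and c: "\<forall>v\<in>S. Ck_on S k U (\<lambda>x. d' x v)" by auto
  have dk: "Ck_on S k U (\<lambda>x. inverse (d x))" by (rule Suc.IH[OF Ck_mono_Suc[OF Suc.prems(1)] Suc.prems(2)])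
  have "\<forall>x\<in>U. ((\<lambda>x. inverse (d x)) has_derivative
     (\<lambda>x v. - (inverse (d x) * d' x v * inverse (d x))) x) (at x within U)"
    using dd Suc.prems(2) by (auto intro: has_derivative_inverse)
  moreover have "\<forall>v\<in>S. Ck_on S k U (\<lambda>x. - (inverse (d x) * d' x v * inverse (d x)))"
  proof
    fix v assume "v \<in> S"
    have "Ck_on S k U (\<lambda>x. (-1) * (inverse (d x) * d' x v * inverse (d x)))"
      using dk c \<open>v\<in>S\<close> by (intro Ck_mult Ck_const) auto
    then show "Ck_on S k U (\<lambda>x. - (inverse (d x) * d' x v * inverse (d x)))" by simp
  qed
  ultimately show ?case by (rule CkI2)
qed

lemma linear_basis_expand:
  fixes L :: "'a::euclidean_space \<Rightarrow> 'b::real_vector"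
  assumes "linear L"
  shows "L w = (\<Sum>i\<in>Basis. (w \<bullet> i) *\<^sub>R L i)"
proof -
  have "L w = L (\<Sum>i\<in>Basis. (w \<bullet> i) *\<^sub>R i)" by (simp add: euclidean_representation)
  also have "\<dots> = (\<Sum>i\<in>Basis. (w \<bullet> i) *\<^sub>R L i)"
    using assms by (simp add: linear_sum linear_scale)
  finally show ?thesis .
qed

lemma Ck_chain:
  fixes h :: "'a::real_normed_vector \<Rightarrow> 'c::euclidean_space" and g :: "'c \<Rightarrow> 'b::real_normed_vector"
  assumes "Ck_on S k U h" "Ck_on UNIV k W g" "open W" "h ` U \<subseteq> W"
  shows "Ck_on S k U (\<lambda>x. g (h x))"
  using assms(1,2,4)
proof (induction k arbitrary: g h)
  case 0
  then have "continuous_on U h" "continuous_on W g" by auto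
  have "continuous_on U (\<lambda>x. g (h x))"
    by (rule continuous_on_compose2[OF \<open>continuous_on W g\<close> \<open>continuous_on U h\<close> \<open>h ` U \<subseteq> W\<close>])
  then show ?case by simp
next
  case (Suc k)
  from Suc.prems(1) obtain h' where dh: "\<forall>x\<in>U. (h has_derivative h' x) (at x within U)"
    and ch: "\<forall>v\<in>S. Ck_on S k U (\<lambda>x. h' x v)" by auto
  from Suc.prems(2) obtain g' where dg: "\<forall>y\<in>W. (g has_derivative g' y) (at y within W)"
    and cg: "\<forall>v\<in>UNIV. Ck_on UNIV k W (\<lambda>y. g' y v)" by auto
  have dg': "(g has_derivative g' y) (at y)" if "y \<in> W" for y
  proof -
    have "(g has_derivative g' y) (at y within W)" using dg that by blast
    then show ?thesis by (simp add: at_within_open[OF that assms(3)])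
  qed
  have hk: "Ck_on S k U h" by (rule Ck_mono_Suc[OF Suc.prems(1)])
  have "\<forall>x\<in>U. ((\<lambda>x. g (h x)) has_derivative (\<lambda>x v. g' (h x) (h' x v)) x) (at x within U)"
  proof
    fix x assume x: "x \<in> U"
    then have "h x \<in> W" using Suc.prems(3) by blast
    then show "((\<lambda>x. g (h x)) has_derivative (\<lambda>x v. g' (h x) (h' x v)) x) (at x within U)"
      using has_derivative_compose[OF dh[rule_format, OF x] dg'] by simp
  qed
  moreover have "\<forall>v\<in>S. Ck_on S k U (\<lambda>x. g' (h x) (h' x v))"
  proof
    fix v assume v: "v \<in> S"
    have "Ck_on S k U (\<lambda>x. \<Sum>i\<in>Basis. (h' x v \<bullet> i) *\<^sub>R g' (h x) i)"
    proof (rule Ck_sum[OF finite_Basis], rule Ck_scaleR)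
      fix i :: 'c assume "i \<in> Basis"
      have "Ck_on S k U (\<lambda>x. h' x v)" using ch v by blast
      then show "Ck_on S k U (\<lambda>x. h' x v \<bullet> i)"
        by (rule Ck_linear[OF bounded_linear_inner_left])
      have "Ck_on UNIV k W (\<lambda>y. g' y i)" using cg by blast
      then show "Ck_on S k U (\<lambda>x. g' (h x) i)"
        by (rule Suc.IH[OF hk _ Suc.prems(3)])
    qed
    then show "Ck_on S k U (\<lambda>x. g' (h x) (h' x v))"
    proof (rule Ck_cong)
      fix x assume "x \<in> U"
      then have "h x \<in> W" using Suc.prems(3) by blast
      then have "linear (g' (h x))" using dg' has_derivative_linear by blast
      then show "(\<Sum>i\<in>Basis. (h' x v \<bullet> i) *\<^sub>R g' (h x) i) = g' (h x) (h' x v)"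
        using linear_basis_expand by metis
    qed
  qed
  ultimately show ?case by (rule CkI2)
qed




lemma mvt_dir:
  fixes g :: "'a::real_normed_vector \<Rightarrow> real"
  assumes s: "0 < s"
    and dg: "\<And>t. 0 \<le> t \<Longrightarrow> t \<le> s \<Longrightarrow> (g has_derivative g' (x + t *\<^sub>R u)) (at (x + t *\<^sub>R u))"
  shows "\<exists>\<xi>. 0 < \<xi> \<and> \<xi> < s \<and> g (x + s *\<^sub>R u) - g x = s * g' (x + \<xi> *\<^sub>R u) u"
proof -
  have "((\<lambda>t. g (x + t *\<^sub>R u)) has_real_derivative g' (x + t *\<^sub>R u) u) (at t)"
    if "0 \<le> t" "t \<le> s" for t
  proof -
    have lin: "linear (g' (x + t *\<^sub>R u))" using dg[OF that] has_derivative_linear by blast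
    have "((\<lambda>t. x + t *\<^sub>R u) has_derivative (\<lambda>h. h *\<^sub>R u)) (at t)"
      by (auto intro!: derivative_eq_intros)
    from has_derivative_compose[OF this dg[OF that]]
    have "((\<lambda>t. g (x + t *\<^sub>R u)) has_derivative (\<lambda>h. g' (x + t *\<^sub>R u) (h *\<^sub>R u))) (at t)" .
    then show ?thesis
      by (rule has_derivative_imp_has_field_derivative) (simp add: linear_scale[OF lin])
  qed
  from MVT2[OF s this] obtain z where "0 < z" "z < s"
    "g (x + s *\<^sub>R u) - g (x + 0 *\<^sub>R u) = (s - 0) * g' (x + z *\<^sub>R u) u" by blast
  then show ?thesis by auto
qed

locale fsetup =
  fixes \<Omega> :: "(real^'n) set" and f :: "real^'n \<Rightarrow> real" and p :: nat
    and Df :: "real^'n \<Rightarrow> real^'n \<Rightarrow> real" and D2 :: "real^'n \<Rightarrow> real^'n \<Rightarrow> real^'n \<Rightarrow> real"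
  assumes p2: "p \<ge> 2" and opn: "open \<Omega>" and nonneg: "\<forall>x\<in>\<Omega>. f x \<ge> 0"
    and Df: "\<And>x. x \<in> \<Omega> \<Longrightarrow> (f has_derivative Df x) (at x)"
    and CkDf: "\<And>v. Ck_on UNIV (p - 1) \<Omega> (\<lambda>x. Df x v)"
    and D2: "\<And>v x. x \<in> \<Omega> \<Longrightarrow> ((\<lambda>x. Df x v) has_derivative D2 v x) (at x)"
    and D2c: "\<And>v w. continuous_on \<Omega> (\<lambda>x. D2 v x w)"
begin

abbreviation "Z \<equiv> zero_set \<Omega> f"

lemma Z_sub: "Z \<subseteq> \<Omega>" by (auto simp: zero_set_def)

lemma Df_zero: "x \<in> Z \<Longrightarrow> Df x = (\<lambda>v. 0)"
  using differential_zero_maxmin[of x \<Omega> f "Df x"] Df opn nonneg by (auto simp: zero_set_def)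

lemma f_deriv_zero: "x \<in> Z \<Longrightarrow> (f has_derivative (\<lambda>v. 0)) (at x)"
  using Df_zero Df Z_sub by force

lemma d2_eq:
  assumes x: "x \<in> \<Omega>" shows "d2 f x v w = D2 v x w"
proof -
  have "((\<lambda>y. frechet_derivative f (at y) v) has_derivative D2 v x) (at x)"
  proof (rule has_derivative_transform_within_open[OF D2[OF x] opn x])
    fix y assume "y \<in> \<Omega>"
    then show "Df y v = frechet_derivative f (at y) v"
      using Df frechet_derivative_at by metis
  qed
  then show ?thesis unfolding d2_def using frechet_derivative_at by metis
qed

lemma D2_linear: "x \<in> \<Omega> \<Longrightarrow> linear (D2 v x)"
  using D2 has_derivative_linear by blast

lemma Df_linear: "x \<in> \<Omega> \<Longrightarrow> linear (Df x)"
  using Df has_derivative_linear by blast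

lemma delta_mvt:
  assumes x: "x \<in> \<Omega>" and s: "0 < s"
    and inside: "\<And>a b. 0 \<le> a \<Longrightarrow> a \<le> s \<Longrightarrow> 0 \<le> b \<Longrightarrow> b \<le> s \<Longrightarrow> x + a *\<^sub>R v + b *\<^sub>R w \<in> \<Omega>"
  shows "\<exists>a b. 0 < a \<and> a < s \<and> 0 < b \<and> b < s \<and>
     f (x + s *\<^sub>R v + s *\<^sub>R w) - f (x + s *\<^sub>R v) - f (x + s *\<^sub>R w) + f x = s * s * D2 v (x + a *\<^sub>R v + b *\<^sub>R w) w"
proof -
  define g1 where "g1 y = f (y + s *\<^sub>R w) - f y" for y
  have "\<exists>\<xi>. 0 < \<xi> \<and> \<xi> < s \<and> g1 (x + s *\<^sub>R v) - g1 x = s * (\<lambda>y u. Df (y + s *\<^sub>R w) u - Df y u) (x + \<xi> *\<^sub>R v) v"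
  proof (rule mvt_dir[OF s])
    fix t assume t: "0 \<le> t" "t \<le> s"
    have i1: "x + t *\<^sub>R v + s *\<^sub>R w \<in> \<Omega>" using inside[OF t] s by auto
    have i2: "x + t *\<^sub>R v \<in> \<Omega>" using inside[OF t, of 0] s by auto
    have "((\<lambda>y. y + s *\<^sub>R w) has_derivative (\<lambda>h. h)) (at (x + t *\<^sub>R v))"
      by (auto intro!: derivative_eq_intros)
    from has_derivative_compose[OF this Df[OF i1]]
    have "((\<lambda>y. f (y + s *\<^sub>R w)) has_derivative Df (x + t *\<^sub>R v + s *\<^sub>R w)) (at (x + t *\<^sub>R v))" by simp
    from has_derivative_diff[OF this Df[OF i2]]
    show "(g1 has_derivative (\<lambda>y u. Df (y + s *\<^sub>R w) u - Df y u) (x + t *\<^sub>R v)) (at (x + t *\<^sub>R v))"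
      unfolding g1_def by simp
  qed
  then obtain \<xi> where xi: "0 < \<xi>" "\<xi> < s"
    and e1: "g1 (x + s *\<^sub>R v) - g1 x = s * (Df (x + \<xi> *\<^sub>R v + s *\<^sub>R w) v - Df (x + \<xi> *\<^sub>R v) v)" by auto
  have "\<exists>\<eta>. 0 < \<eta> \<and> \<eta> < s \<and> (\<lambda>y. Df y v) ((x + \<xi> *\<^sub>R v) + s *\<^sub>R w) - (\<lambda>y. Df y v) (x + \<xi> *\<^sub>R v)
      = s * (\<lambda>y. D2 v y) ((x + \<xi> *\<^sub>R v) + \<eta> *\<^sub>R w) w"
  proof (rule mvt_dir[OF s])
    fix t assume t: "0 \<le> t" "t \<le> s"
    have "x + \<xi> *\<^sub>R v + t *\<^sub>R w \<in> \<Omega>" using inside[of \<xi> t] xi t by auto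
    then show "((\<lambda>y. Df y v) has_derivative D2 v (x + \<xi> *\<^sub>R v + t *\<^sub>R w)) (at (x + \<xi> *\<^sub>R v + t *\<^sub>R w))"
      using D2 by blast
  qed
  then obtain \<eta> where eta: "0 < \<eta>" "\<eta> < s"
    and e2: "Df (x + \<xi> *\<^sub>R v + s *\<^sub>R w) v - Df (x + \<xi> *\<^sub>R v) v = s * D2 v (x + \<xi> *\<^sub>R v + \<eta> *\<^sub>R w) w"
    by auto
  have "f (x + s *\<^sub>R v + s *\<^sub>R w) - f (x + s *\<^sub>R v) - f (x + s *\<^sub>R w) + f x = g1 (x + s *\<^sub>R v) - g1 x"
    unfolding g1_def by simp
  also have "\<dots> = s * s * D2 v (x + \<xi> *\<^sub>R v + \<eta> *\<^sub>R w) w" using e1 e2 by simp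
  finally show ?thesis using xi eta by blast
qed

lemma D2_sym:
  assumes x: "x \<in> \<Omega>" shows "D2 v x w = D2 w x v"
proof -
  have est: "\<bar>D2 v x w - D2 w x v\<bar> \<le> 2 * e" if e: "e > 0" for e
  proof -
    obtain r where r: "r > 0" "ball x r \<subseteq> \<Omega>" using opn x open_contains_ball by blast
    obtain d1 where d1: "d1 > 0" "\<And>y. y \<in> \<Omega> \<Longrightarrow> dist y x < d1 \<Longrightarrow> dist (D2 v y w) (D2 v x w) < e"
      using D2c[of v w] x e unfolding continuous_on_iff by blast
    obtain d2 where d2: "d2 > 0" "\<And>y. y \<in> \<Omega> \<Longrightarrow> dist y x < d2 \<Longrightarrow> dist (D2 w y v) (D2 w x v) < e"
      using D2c[of w v] x e unfolding continuous_on_iff by blast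
    define \<rho> where "\<rho> = min r (min d1 d2)"
    have rho: "\<rho> > 0" "\<rho> \<le> r" "\<rho> \<le> d1" "\<rho> \<le> d2" using r d1 d2 by (auto simp: \<rho>_def)
    define s where "s = \<rho> / (2 * (norm v + norm w + 1))"
    have pos: "2 * (norm v + norm w + 1) > 0"
      by (intro mult_pos_pos add_nonneg_pos add_nonneg_nonneg) auto
    have s: "s > 0" unfolding s_def using rho pos by (intro divide_pos_pos)
    have sb: "s * (norm v + norm w) < \<rho>"
    proof -
      have "s * (norm v + norm w) \<le> s * (norm v + norm w + 1)" using s by simp
      also have "\<dots> = \<rho> / 2" unfolding s_def using pos by (simp add: field_simps)
      finally show ?thesis using rho by linarith
    qed
    have near: "dist (x + a *\<^sub>R v + b *\<^sub>R w) x < \<rho>" if "0 \<le> a" "a \<le> s" "0 \<le> b" "b \<le> s" for a b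
    proof -
      have "dist (x + a *\<^sub>R v + b *\<^sub>R w) x = norm (a *\<^sub>R v + b *\<^sub>R w)" by (simp add: dist_norm)
      also have "\<dots> \<le> a * norm v + b * norm w"
        using norm_triangle_ineq[of "a *\<^sub>R v" "b *\<^sub>R w"] that by simp
      also have "\<dots> \<le> s * norm v + s * norm w"
        using that by (intro add_mono mult_right_mono) auto
      finally show ?thesis using sb by (simp add: distrib_left)
    qed
    have near2: "dist (x + a *\<^sub>R w + b *\<^sub>R v) x < \<rho>" if "0 \<le> a" "a \<le> s" "0 \<le> b" "b \<le> s" for a b
      using near[OF that(3,4,1,2)] by (simp add: add_ac)
    have ins: "x + a *\<^sub>R v + b *\<^sub>R w \<in> \<Omega>" if "0 \<le> a" "a \<le> s" "0 \<le> b" "b \<le> s" for a b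
      using near[OF that] rho r by (auto simp: dist_commute)
    have ins2: "x + a *\<^sub>R w + b *\<^sub>R v \<in> \<Omega>" if "0 \<le> a" "a \<le> s" "0 \<le> b" "b \<le> s" for a b
      using near2[OF that] rho r by (auto simp: dist_commute)
    obtain a b where ab: "0 < a" "a < s" "0 < b" "b < s"
      and E1: "f (x + s *\<^sub>R v + s *\<^sub>R w) - f (x + s *\<^sub>R v) - f (x + s *\<^sub>R w) + f x = s * s * D2 v (x + a *\<^sub>R v + b *\<^sub>R w) w"
      using delta_mvt[OF x s ins] by blast
    obtain a' b' where ab': "0 < a'" "a' < s" "0 < b'" "b' < s"
      and E2: "f (x + s *\<^sub>R w + s *\<^sub>R v) - f (x + s *\<^sub>R w) - f (x + s *\<^sub>R v) + f x = s * s * D2 w (x + a' *\<^sub>R w + b' *\<^sub>R v) v"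
      using delta_mvt[OF x s ins2] by blast
    have "s * s * D2 v (x + a *\<^sub>R v + b *\<^sub>R w) w = s * s * D2 w (x + a' *\<^sub>R w + b' *\<^sub>R v) v"
    proof -
      have pe: "x + s *\<^sub>R w + s *\<^sub>R v = x + s *\<^sub>R v + s *\<^sub>R w" by (simp add: add_ac)
      have "f (x + s *\<^sub>R v + s *\<^sub>R w) - f (x + s *\<^sub>R w) - f (x + s *\<^sub>R v) + f x = s * s * D2 w (x + a' *\<^sub>R w + b' *\<^sub>R v) v"
        using E2 unfolding pe .
      then show ?thesis using E1 by linarith
    qed
    then have eq: "D2 v (x + a *\<^sub>R v + b *\<^sub>R w) w = D2 w (x + a' *\<^sub>R w + b' *\<^sub>R v) v" using s by simp
    have y1: "dist (D2 v (x + a *\<^sub>R v + b *\<^sub>R w) w) (D2 v x w) < e"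
      using d1(2)[OF ins[of a b] less_le_trans[OF near[of a b] rho(3)]] ab by auto
    have y2: "dist (D2 w (x + a' *\<^sub>R w + b' *\<^sub>R v) v) (D2 w x v) < e"
      using d2(2)[OF ins2[of a' b'] less_le_trans[OF near2[of a' b'] rho(4)]] ab' by auto
    show ?thesis using y1 y2 eq by (simp add: dist_real_def)
  qed
  have "\<bar>D2 v x w - D2 w x v\<bar> \<le> 0"
  proof (rule field_le_epsilon)
    fix e :: real assume "0 < e"
    then have "\<bar>D2 v x w - D2 w x v\<bar> \<le> 2 * (e / 2)" using est[of "e/2"] by simp
    then show "\<bar>D2 v x w - D2 w x v\<bar> \<le> 0 + e" by simp
  qed
  then show ?thesis by simp
qed

end



lemma lin_real_expand:
  fixes L :: "real^'n \<Rightarrow> real"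
  assumes "linear L"
  shows "L v = (\<Sum>i\<in>UNIV. v $ i * L (axis i 1))"
proof -
  have "L v = L (\<Sum>i\<in>UNIV. v $ i *\<^sub>R axis i 1)"
    using basis_expansion[of v] by (simp add: scalar_mult_eq_scaleR)
  also have "\<dots> = (\<Sum>i\<in>UNIV. v $ i * L (axis i 1))"
    using assms by (simp add: linear_sum linear_scale)
  finally show ?thesis .
qed

lemma quad_zero:
  fixes a c :: real
  assumes h: "\<And>t. 0 \<le> 2 * t * a + t * t * c" and c: "c \<ge> 0"
  shows "a = 0"
proof (rule ccontr)
  assume a: "a \<noteq> 0"
  define t where "t = - a / (c + 1)"
  have tc: "t * (c + 1) = - a" unfolding t_def using c by simp
  have "0 \<le> 2 * t * a + t * (t * c)" using h[of t] by (simp add: mult.assoc)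
  also have "t * c = - a - t" using tc by (simp add: algebra_simps)
  finally have "0 \<le> t * (a - t)" by (simp add: algebra_simps)
  moreover have "t * (a - t) < 0"
  proof (cases "a > 0")
    case True
    then have "t < 0" unfolding t_def using c by (simp add: divide_pos_pos)
    moreover have "a - t > 0" using True \<open>t < 0\<close> by simp
    ultimately show ?thesis by (simp add: mult_neg_pos)
  next
    case False
    then have "a < 0" using a by simp
    have "c + 1 > 0" using c by simp
    then have "t > 0" unfolding t_def using \<open>a < 0\<close> by (simp add: divide_neg_pos)
    moreover have "a - t < 0" using \<open>a < 0\<close> \<open>t > 0\<close> by simp
    ultimately show ?thesis by (simp add: mult_pos_neg)
  qed
  ultimately show False by simp
qed

context fsetup begin

lemma psd:
  assumes x: "x \<in> Z" shows "D2 v x v \<ge> 0"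
proof (rule ccontr)
  assume "\<not> D2 v x v \<ge> 0"
  then have c: "D2 v x v < 0" by simp
  have xO: "x \<in> \<Omega>" and fx: "f x = 0" using x by (auto simp: zero_set_def)
  obtain r where r: "r > 0" "ball x r \<subseteq> \<Omega>" using opn xO open_contains_ball by blast
  have hc: "- D2 v x v / 2 > 0" using c by simp
  obtain d where d: "d > 0" "\<And>y. y \<in> \<Omega> \<Longrightarrow> dist y x < d \<Longrightarrow> dist (D2 v y v) (D2 v x v) < - D2 v x v / 2"
    using D2c[of v v] xO hc unfolding continuous_on_iff by blast
  define \<rho> where "\<rho> = min r d"
  have rho: "\<rho> > 0" "\<rho> \<le> r" "\<rho> \<le> d" using r d by (auto simp: \<rho>_def)
  define s where "s = \<rho> / (2 * (norm v + 1))"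
  have pos: "2 * (norm v + 1) > 0" by (intro mult_pos_pos add_nonneg_pos) auto
  have s: "s > 0" unfolding s_def using rho pos by (intro divide_pos_pos)
  have sb: "s * norm v < \<rho>"
  proof -
    have "s * norm v \<le> s * (norm v + 1)" using s by simp
    also have "\<dots> = \<rho> / 2" unfolding s_def using pos by (simp add: field_simps)
    finally show ?thesis using rho by linarith
  qed
  have near: "dist (x + t *\<^sub>R v) x < \<rho>" if "0 \<le> t" "t \<le> s" for t
  proof -
    have "dist (x + t *\<^sub>R v) x = t * norm v" using that by (simp add: dist_norm)
    also have "\<dots> \<le> s * norm v" using that by (intro mult_right_mono) auto
    finally show ?thesis using sb by simp
  qed
  have ins: "x + t *\<^sub>R v \<in> \<Omega>" if "0 \<le> t" "t \<le> s" for t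
    using near[OF that] rho r by (auto simp: dist_commute)
  obtain \<xi> where xi: "0 < \<xi>" "\<xi> < s" and e1: "f (x + s *\<^sub>R v) - f x = s * Df (x + \<xi> *\<^sub>R v) v"
    using mvt_dir[OF s, of f Df x v] Df ins by blast
  have dd: "((\<lambda>y. Df y v) has_derivative D2 v (x + t *\<^sub>R v)) (at (x + t *\<^sub>R v))"
    if "0 \<le> t" "t \<le> \<xi>" for t
  proof -
    have "x + t *\<^sub>R v \<in> \<Omega>" using ins that xi by auto
    then show ?thesis using D2 by blast
  qed
  from mvt_dir[OF xi(1) dd]
  obtain \<eta> where eta: "0 < \<eta>" "\<eta> < \<xi>" and e2: "Df (x + \<xi> *\<^sub>R v) v - Df x v = \<xi> * D2 v (x + \<eta> *\<^sub>R v) v"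
    by blast
  have "Df x v = 0" using Df_zero[OF x] by simp
  then have fv: "f (x + s *\<^sub>R v) = s * (\<xi> * D2 v (x + \<eta> *\<^sub>R v) v)" using e1 e2 fx by simp
  have "dist (D2 v (x + \<eta> *\<^sub>R v) v) (D2 v x v) < - D2 v x v / 2"
    using d(2)[OF ins[of \<eta>] less_le_trans[OF near[of \<eta>] rho(3)]] eta xi by auto
  then have neg: "D2 v (x + \<eta> *\<^sub>R v) v < 0" using c by (simp add: dist_real_def)
  have "s * (\<xi> * D2 v (x + \<eta> *\<^sub>R v) v) < 0"
    using s xi neg by (simp add: mult_pos_neg)
  moreover have "f (x + s *\<^sub>R v) \<ge> 0" using nonneg ins[of s] s by auto
  ultimately show False using fv by simp
qed

lemma D2_lin1: assumes "x \<in> \<Omega>" shows "linear (\<lambda>v. D2 v x w)"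
proof -
  have "(\<lambda>v. D2 v x w) = D2 w x" using D2_sym[OF assms] by auto
  then show ?thesis using D2_linear[OF assms] by simp
qed

lemma D2_add1: "x \<in> \<Omega> \<Longrightarrow> D2 (u + v) x w = D2 u x w + D2 v x w"
  using linear_add[OF D2_lin1[of x w]] by simp
lemma D2_scale1: "x \<in> \<Omega> \<Longrightarrow> D2 (t *\<^sub>R u) x w = t * D2 u x w"
  using linear_scale[OF D2_lin1[of x w]] by simp
lemma D2_add2: "x \<in> \<Omega> \<Longrightarrow> D2 w x (u + v) = D2 w x u + D2 w x v"
  using D2_linear[of x w] by (simp add: linear_add)
lemma D2_scale2: "x \<in> \<Omega> \<Longrightarrow> D2 w x (t *\<^sub>R u) = t * D2 w x u"
  using D2_linear[of x w] by (simp add: linear_scale)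

definition K :: "real^'n \<Rightarrow> (real^'n) set" where "K x = {v. \<forall>w. D2 v x w = 0}"

definition W :: "real^'n \<Rightarrow> (real^'n) set" where "W x = {y. \<forall>k\<in>K x. orthogonal k y}"

lemma K_subspace: "x \<in> \<Omega> \<Longrightarrow> subspace (K x)"
  unfolding subspace_def K_def
proof (intro conjI ballI allI)
  assume x: "x \<in> \<Omega>"
  show "0 \<in> {v. \<forall>w. D2 v x w = 0}" using linear_0[OF D2_lin1[OF x]] by simp
  fix u v assume "u \<in> {v. \<forall>w. D2 v x w = 0}" "v \<in> {v. \<forall>w. D2 v x w = 0}"
  then show "u + v \<in> {v. \<forall>w. D2 v x w = 0}" using D2_add1[OF x] by simp
next
  fix c :: real and v assume x: "x \<in> \<Omega>" and "v \<in> {v. \<forall>w. D2 v x w = 0}"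
  then show "c *\<^sub>R v \<in> {v. \<forall>w. D2 v x w = 0}" using D2_scale1[OF x] by simp
qed

lemma W_subspace: "subspace (W x)"
  unfolding W_def using subspace_orthogonal_comp[of "K x"] by (simp add: orthogonal_comp_def)

lemma dim_W: "x \<in> \<Omega> \<Longrightarrow> dim (W x) + dim (K x) = CARD('n)"
  using dim_subspace_orthogonal_to_vectors[of "K x" UNIV] K_subspace[of x]
  by (simp add: W_def dim_UNIV)

lemma PD:
  assumes x: "x \<in> Z" and w: "w \<in> W x" "w \<noteq> 0"
  shows "D2 w x w > 0"
proof (rule ccontr)
  assume "\<not> D2 w x w > 0"
  then have w0: "D2 w x w = 0" using psd[OF x, of w] by simp
  have xO: "x \<in> \<Omega>" using x Z_sub by blast
  have "w \<in> K x"
    unfolding K_def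
  proof (safe)
    fix u
    have "0 \<le> 2 * t * D2 w x u + t * t * D2 u x u" for t
    proof -
      have "0 \<le> D2 (w + t *\<^sub>R u) x (w + t *\<^sub>R u)" by (rule psd[OF x])
      also have "\<dots> = D2 w x w + t * D2 w x u + t * D2 u x w + t * t * D2 u x u"
        using xO by (simp add: D2_add1 D2_add2 D2_scale1 D2_scale2 algebra_simps)
      also have "D2 u x w = D2 w x u" using D2_sym[OF xO] by blast
      finally show ?thesis using w0 by simp
    qed
    then show "D2 w x u = 0" using quad_zero psd[OF x, of u] by blast
  qed
  then have "orthogonal w w" using w(1) unfolding W_def by blast
  then show False using w(2) by (simp add: orthogonal_def)
qed

end



context fsetup begin

lemma kerK:
  assumes x: "x \<in> \<Omega>" shows "(\<forall>i. D2 (axis i 1) x v = 0) \<longleftrightarrow> v \<in> K x"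
proof
  assume h: "\<forall>i. D2 (axis i 1) x v = 0"
  show "v \<in> K x" unfolding K_def
  proof (safe)
    fix w
    have "D2 v x w = (\<Sum>i\<in>UNIV. w $ i * D2 v x (axis i 1))"
      by (rule lin_real_expand[OF D2_linear[OF x]])
    also have "\<dots> = 0" using h D2_sym[OF x] by simp
    finally show "D2 v x w = 0" .
  qed
next
  assume v: "v \<in> K x"
  show "\<forall>i. D2 (axis i 1) x v = 0"
  proof
    fix i
    have "D2 v x (axis i 1) = 0" using v by (simp add: K_def)
    then show "D2 (axis i 1) x v = 0" using D2_sym[OF x, of "axis i 1" v] by simp
  qed
qed

lemma rank_hessian:
  assumes x: "x \<in> \<Omega>" shows "rank (hessian f x) = CARD('n) - dim (K x)"
proof -
  define H where "H = hessian f x"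
  have Hij: "H $ i $ j = D2 (axis i 1) x (axis j 1)" for i j
    unfolding H_def hessian_def using d2_eq[OF x] by simp
  have Hv: "(H *v v) $ i = D2 (axis i 1) x v" for v i
  proof -
    have "(H *v v) $ i = (\<Sum>j\<in>UNIV. H $ i $ j * v $ j)" by (simp add: matrix_vector_mult_def)
    also have "\<dots> = (\<Sum>j\<in>UNIV. v $ j * D2 (axis i 1) x (axis j 1))" by (simp add: Hij mult.commute)
    also have "\<dots> = D2 (axis i 1) x v" by (rule lin_real_expand[OF D2_linear[OF x], symmetric])
    finally show ?thesis .
  qed
  have ker: "((*v) H) -` {0} = K x"
  proof -
    have "H *v v = 0 \<longleftrightarrow> (\<forall>i. D2 (axis i 1) x v = 0)" for v
      by (simp add: vec_eq_iff Hv)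
    then show ?thesis using kerK[OF x] by auto
  qed
  have tr: "transpose H = H"
    by (simp add: vec_eq_iff transpose_def Hij D2_sym[OF x])
  define R where "R = range ((*v) H)"
  have "((*v) H) -` {0} = R\<^sup>\<bottom>"
    using ker_orthogonal_comp_adjoint[of "(*v) H"] by (simp add: adjoint_matrix tr R_def)
  then have KR: "K x = {y. \<forall>r\<in>R. orthogonal r y}" using ker by (simp add: orthogonal_comp_def)
  have sR: "subspace R" unfolding R_def
    by (rule linear_subspace_image[OF matrix_vector_mul_linear subspace_UNIV])
  have "dim {y \<in> UNIV. \<forall>r\<in>R. orthogonal r y} + dim R = dim (UNIV :: (real^'n) set)"
    by (rule dim_subspace_orthogonal_to_vectors[OF sR subspace_UNIV]) simp
  then have "dim (K x) + dim R = CARD('n)" using KR by (simp add: dim_UNIV)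
  moreover have "rank H = dim R" by (simp add: rank_dim_range R_def)
  ultimately show ?thesis unfolding H_def by simp
qed

lemma tangent_in_K:
  fixes S :: "(real^'n) set"
  assumes x0: "x0 \<in> Z" and S: "subspace S" and U: "openin (top_of_set S) U" "0 \<in> U"
    and phiU: "\<phi> ` U \<subseteq> Z" and phi0: "\<phi> 0 = x0"
    and dphi: "(\<phi> has_derivative \<phi>') (at 0 within U)"
    and s: "s \<in> S"
  shows "\<phi>' s \<in> K x0"
proof -
  have x0O: "x0 \<in> \<Omega>" using x0 Z_sub by blast
  obtain e where e: "e > 0" "\<And>y. y \<in> S \<Longrightarrow> dist y 0 < e \<Longrightarrow> y \<in> U"
    using U unfolding openin_euclidean_subtopology_iff by blast
  define \<delta> where "\<delta> = e / (norm s + 1)"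
  have npos: "norm s + 1 > 0" by (simp add: add_nonneg_pos)
  have dpos: "\<delta> > 0" unfolding \<delta>_def using e npos by simp
  have inU: "t *\<^sub>R s \<in> U" if "t \<in> ball 0 \<delta>" for t
  proof (rule e(2))
    show "t *\<^sub>R s \<in> S" using S s by (simp add: subspace_scale)
    have "\<bar>t\<bar> < \<delta>" using that by (simp add: dist_norm)
    then have "\<bar>t\<bar> * norm s \<le> \<delta> * norm s" by (simp add: mult_right_mono)
    also have "\<dots> < e"
    proof -
      have "\<delta> * norm s < \<delta> * (norm s + 1)" using dpos by simp
      also have "\<dots> = e" unfolding \<delta>_def using npos by simp
      finally show ?thesis .
    qed
    finally show "dist (t *\<^sub>R s) 0 < e" by (simp add: dist_norm)
  qed
  show ?thesis
    unfolding kerK[OF x0O, symmetric]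
  proof
    fix i
    define gi where "gi y = Df y (axis i 1)" for y
    have dgi: "(gi has_derivative D2 (axis i 1) x0) (at (\<phi> 0))"
      unfolding gi_def phi0 using D2[OF x0O] by blast
    have dc: "((\<lambda>t. t *\<^sub>R s) has_derivative (\<lambda>t. t *\<^sub>R s)) (at 0 within ball 0 \<delta>)"
      by (auto intro!: derivative_eq_intros)
    have "(\<lambda>t. t *\<^sub>R s) ` ball 0 \<delta> \<subseteq> U" using inU by auto
    then have "(\<phi> has_derivative \<phi>') (at 0 within (\<lambda>t. t *\<^sub>R s) ` ball 0 \<delta>)"
      by (rule has_derivative_subset[OF dphi])
    moreover have e0: "(\<lambda>t::real. t *\<^sub>R s) 0 = 0" by simp
    ultimately have dphi': "(\<phi> has_derivative \<phi>') (at ((\<lambda>t. t *\<^sub>R s) 0) within (\<lambda>t. t *\<^sub>R s) ` ball 0 \<delta>)"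
      by (simp only:)
    have "((\<phi> \<circ> (\<lambda>t. t *\<^sub>R s)) has_derivative (\<phi>' \<circ> (\<lambda>t. t *\<^sub>R s))) (at 0 within ball 0 \<delta>)"
      by (rule diff_chain_within[OF dc dphi'])
    from has_derivative_compose[OF this, of gi "D2 (axis i 1) x0"] dgi
    have "((\<lambda>t. gi (\<phi> (t *\<^sub>R s))) has_derivative (\<lambda>t. D2 (axis i 1) x0 (\<phi>' (t *\<^sub>R s)))) (at 0 within ball 0 \<delta>)"
      by (simp add: o_def)
    note dd = this
    have d1: "((\<lambda>t. gi (\<phi> (t *\<^sub>R s))) has_derivative (\<lambda>t. D2 (axis i 1) x0 (\<phi>' (t *\<^sub>R s)))) (at 0)"
    proof -
      have "at (0::real) within ball 0 \<delta> = at 0" by (rule at_within_open) (use dpos in auto)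
      then show ?thesis using dd by simp
    qed
    have z: "gi (\<phi> (t *\<^sub>R s)) = 0" if "t \<in> ball 0 \<delta>" for t
    proof -
      have "\<phi> (t *\<^sub>R s) \<in> Z" using phiU inU[OF that] by blast
      then show ?thesis unfolding gi_def using Df_zero by simp
    qed
    have d2': "((\<lambda>t. 0) has_derivative (\<lambda>t. D2 (axis i 1) x0 (\<phi>' (t *\<^sub>R s)))) (at (0::real))"
      by (rule has_derivative_transform_within_open[OF d1, of "ball 0 \<delta>"]) (use dpos z in auto)
    have "(\<lambda>t. D2 (axis i 1) x0 (\<phi>' (t *\<^sub>R s))) = (\<lambda>t. 0)"
      by (rule has_derivative_unique[OF d2']) simp
    from fun_cong[OF this, of 1] have "D2 (axis i 1) x0 (\<phi>' (1 *\<^sub>R s)) = 0" by simp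
    then show "D2 (axis i 1) x0 (\<phi>' s) = 0" by simp
  qed
qed

lemma dim_le_K:
  fixes S :: "(real^'n) set"
  assumes x0: "x0 \<in> Z" and S: "subspace S" and U: "openin (top_of_set S) U" "0 \<in> U"
    and phiU: "\<phi> ` U \<subseteq> Z" and phi0: "\<phi> 0 = x0"
    and dphi: "(\<phi> has_derivative \<phi>') (at 0 within U)" and inj: "inj_on \<phi>' S"
  shows "dim S \<le> dim (K x0)"
proof -
  have x0O: "x0 \<in> \<Omega>" using x0 Z_sub by blast
  have "bounded_linear \<phi>'" using dphi has_derivative_bounded_linear by blast
  then have c: "continuous_on S \<phi>'" by (rule linear_continuous_on)
  have i: "\<phi>' ` S \<subseteq> K x0" using tangent_in_K[OF assms(1-7)] by blast
  show ?thesis by (rule continuous_injective_image_subspace_dim_le[OF S K_subspace[OF x0O] c i inj])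
qed

end



lemma vec_from_comps: "(\<chi> k. c k) = (\<Sum>k\<in>UNIV. c k *\<^sub>R (axis k 1 :: real^'n))"
  using basis_expansion[of "(\<chi> k. c k) :: real^'n"] by (simp add: scalar_mult_eq_scaleR)

lemma Ck_vec:
  fixes c :: "'n::finite \<Rightarrow> 'a::real_normed_vector \<Rightarrow> real"
  assumes "\<And>k. Ck_on S m U (c k)"
  shows "Ck_on S m U (\<lambda>x. (\<chi> k. c k x) :: real^'n)"
proof -
  have "Ck_on S m U (\<lambda>x. \<Sum>k\<in>UNIV. c k x *\<^sub>R (axis k 1 :: real^'n))"
    by (intro Ck_sum Ck_scaleR assms Ck_const) auto
  then show ?thesis by (rule Ck_cong) (simp add: vec_from_comps)
qed

lemma Ck_det:
  fixes M :: "'a::real_normed_vector \<Rightarrow> real^'n^'n"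
  assumes "\<And>i j. Ck_on S m U (\<lambda>x. M x $ i $ j)"
  shows "Ck_on S m U (\<lambda>x. det (M x))"
proof -
  have "Ck_on S m U (\<lambda>x. \<Sum>q\<in>{q. q permutes (UNIV::'n set)}. of_int (sign q) * (\<Prod>i\<in>UNIV. M x $ i $ q i))"
    by (intro Ck_sum Ck_mult Ck_const Ck_prod assms finite_permutations) auto
  then show ?thesis by (rule Ck_cong) (simp add: det_def)
qed

definition cram :: "real^'n^'n \<Rightarrow> real^'n \<Rightarrow> real^'n" where
  "cram A b = (\<chi> k. det (\<chi> i j. if j = k then b $ i else A $ i $ j) / det A)"

lemma Ck_cram:
  fixes M :: "'a::real_normed_vector \<Rightarrow> real^'n^'n"
  assumes "\<And>i j. Ck_on S m U (\<lambda>x. M x $ i $ j)" "\<And>x. x \<in> U \<Longrightarrow> det (M x) \<noteq> 0"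
  shows "Ck_on S m U (\<lambda>x. cram (M x) b)"
  unfolding cram_def divide_inverse
proof (rule Ck_vec, rule Ck_mult)
  fix k
  show "Ck_on S m U (\<lambda>x. det (\<chi> i j. if j = k then b $ i else M x $ i $ j))"
  proof (rule Ck_det)
    fix i j show "Ck_on S m U (\<lambda>x. (\<chi> i j. if j = k then b $ i else M x $ i $ j) $ i $ j)"
      by (cases "j = k") (simp_all add: Ck_const assms)
  qed
  show "Ck_on S m U (\<lambda>x. inverse (det (M x)))"
    by (rule Ck_inverse[OF Ck_det[OF assms(1)]]) (use assms(2) in auto)
qed

lemma cram_inv:
  fixes L :: "real^'n \<Rightarrow> real^'n"
  assumes "linear L" "bij L"
  shows "inv_into UNIV L b = cram (matrix L) b"
proof -
  have dz: "det (matrix L) \<noteq> 0" using assms det_nz_iff_inj bij_is_inj by blast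
  have "L (inv_into UNIV L b) = b" using assms(2) by (simp add: bij_is_surj surj_f_inv_f)
  then have "matrix L *v inv_into UNIV L b = b"
    using matrix_works[of L "inv_into UNIV L b"] assms(1) by (simp add: scalar_mult_eq_scaleR)
  then show ?thesis using cramer[OF dz] unfolding cram_def by blast
qed

context fsetup begin

lemma D2_Ck: "Ck_on UNIV (p - 2) \<Omega> (\<lambda>x. D2 w x u)"
proof -
  have eq: "p - 1 = Suc (p - 2)" using p2 by arith
  have "Ck_on UNIV (Suc (p - 2)) \<Omega> (\<lambda>x. Df x w)" using CkDf[of w, unfolded eq] .
  then obtain g' where d: "\<forall>x\<in>\<Omega>. ((\<lambda>x. Df x w) has_derivative g' x) (at x within \<Omega>)"
    and c: "\<forall>v\<in>UNIV. Ck_on UNIV (p - 2) \<Omega> (\<lambda>x. g' x v)" by auto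
  have "g' x = D2 w x" if x: "x \<in> \<Omega>" for x
  proof -
    have "((\<lambda>x. Df x w) has_derivative g' x) (at x within \<Omega>)" using d x by blast
    then have "((\<lambda>x. Df x w) has_derivative g' x) (at x)" by (simp add: at_within_open[OF x opn])
    then show ?thesis using has_derivative_unique D2[OF x] by blast
  qed
  moreover have "Ck_on UNIV (p - 2) \<Omega> (\<lambda>x. g' x u)" using c by blast
  ultimately show ?thesis using Ck_cong[of UNIV "p - 2" \<Omega> "\<lambda>x. g' x u" "\<lambda>x. D2 w x u"] by simp
qed

definition G :: "real^'n \<Rightarrow> real^'n" where "G x = (\<chi> j. Df x (axis j 1))"
definition HG :: "real^'n \<Rightarrow> real^'n \<Rightarrow> real^'n" where "HG x v = (\<chi> j. D2 (axis j 1) x v)"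

lemma G_Ck: "Ck_on UNIV (p - 1) \<Omega> G"
  unfolding G_def by (rule Ck_vec) (rule CkDf)

lemma G_zero: "x \<in> Z \<Longrightarrow> G x = 0"
  unfolding G_def using Df_zero by (simp add: vec_eq_iff)

lemma G_deriv: assumes x: "x \<in> \<Omega>" shows "(G has_derivative HG x) (at x)"
proof -
  have "((\<lambda>x. \<Sum>j\<in>UNIV. Df x (axis j 1) *\<^sub>R (axis j 1 :: real^'n)) has_derivative
          (\<lambda>v. \<Sum>j\<in>UNIV. D2 (axis j 1) x v *\<^sub>R axis j 1)) (at x)"
    by (intro has_derivative_sum has_derivative_scaleR_left D2[OF x])
  then show ?thesis unfolding G_def HG_def by (simp add: vec_from_comps)
qed

lemma HG_linear: "x \<in> \<Omega> \<Longrightarrow> linear (HG x)"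
  using G_deriv has_derivative_linear by blast

lemma HG_Ck: "Ck_on UNIV (p - 2) \<Omega> (\<lambda>x. HG x v)"
  unfolding HG_def by (rule Ck_vec) (rule D2_Ck)

lemma HG_orth: assumes x: "x \<in> \<Omega>" and k: "k \<in> K x" shows "k \<bullet> HG x v = 0"
proof -
  have "k \<bullet> HG x v = (\<Sum>j\<in>UNIV. k $ j * D2 (axis j 1) x v)"
    unfolding HG_def inner_vec_def by simp
  also have "\<dots> = D2 k x v" by (rule lin_real_expand[OF D2_lin1[OF x], symmetric])
  also have "\<dots> = 0" using k by (simp add: K_def)
  finally show ?thesis .
qed

lemma HG_zero_iff: "x \<in> \<Omega> \<Longrightarrow> HG x v = 0 \<longleftrightarrow> v \<in> K x"
  unfolding HG_def using kerK by (simp add: vec_eq_iff)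

lemma exists_P:
  assumes x0: "x0 \<in> \<Omega>"
  obtains P where "linear P" "\<And>v. P v \<in> K x0" "\<And>k. k \<in> K x0 \<Longrightarrow> P k = k"
proof -
  obtain B where B: "B \<subseteq> K x0" "pairwise orthogonal B" "\<And>x. x \<in> B \<Longrightarrow> norm x = 1"
    "independent B" "card B = dim (K x0)" "span B = K x0"
    using orthonormal_basis_subspace[OF K_subspace[OF x0]] by blast
  have fin: "finite B" using B(4) independent_imp_finite by blast
  define P where "P v = (\<Sum>b\<in>B. (v \<bullet> b) *\<^sub>R b)" for v
  have "linear P" unfolding P_def
    by (rule linearI) (simp_all add: inner_add_left scaleR_add_left sum.distrib scaleR_sum_right)
  moreover have "P v \<in> K x0" for v
    unfolding P_def using B(1) K_subspace[OF x0]
    by (intro subspace_sum subspace_scale) (auto simp: fin)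
  moreover have "P k = k" if "k \<in> K x0" for k
    unfolding P_def using orthonormal_basis_expand[OF B(2) B(3)] that B(6) fin by auto
  ultimately show ?thesis using that by blast
qed

end



locale atP = fsetup \<Omega> f p Df D2 for \<Omega> :: "(real^'n) set" and f p Df D2 +
  fixes x0 :: "real^'n" and P :: "real^'n \<Rightarrow> real^'n"
  assumes x0: "x0 \<in> Z" and Plin: "linear P" and PK: "\<And>v. P v \<in> K x0" and Pid: "\<And>k. k \<in> K x0 \<Longrightarrow> P k = k"
begin

definition F :: "real^'n \<Rightarrow> real^'n" where "F x = P (x - x0) + G x"
definition F' :: "real^'n \<Rightarrow> real^'n \<Rightarrow> real^'n" where "F' x v = P v + HG x v"

lemma x0O: "x0 \<in> \<Omega>" using x0 Z_sub by blast

lemma Pbl: "bounded_linear P" using Plin linear_conv_bounded_linear by blast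

lemma F_deriv: assumes x: "x \<in> \<Omega>" shows "(F has_derivative F' x) (at x)"
proof -
  have "((\<lambda>x. P (x - x0)) has_derivative (\<lambda>h. P (h - 0))) (at x)"
    by (rule bounded_linear.has_derivative[OF Pbl]) (auto intro!: derivative_eq_intros)
  from has_derivative_add[OF this G_deriv[OF x]]
  show ?thesis unfolding F_def[abs_def] F'_def[abs_def] by simp
qed

lemma F'_lin: "x \<in> \<Omega> \<Longrightarrow> linear (F' x)"
  using F_deriv has_derivative_linear by blast

lemma F_Ck: "Ck_on UNIV (p - 1) \<Omega> F"
proof -
  have "Ck_on UNIV (p - 1) \<Omega> (\<lambda>x. x + (- x0))" by (intro Ck_add Ck_id Ck_const)
  then have "Ck_on UNIV (p - 1) \<Omega> (\<lambda>x. P (x + (- x0)))" by (rule Ck_linear[OF Pbl])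
  then have "Ck_on UNIV (p - 1) \<Omega> (\<lambda>x. P (x + (- x0)) + G x)" by (intro Ck_add G_Ck)
  then show ?thesis unfolding F_def[abs_def] by simp
qed

lemma F'_Ck: "Ck_on UNIV (p - 2) \<Omega> (\<lambda>x. F' x v)"
  unfolding F'_def by (intro Ck_add Ck_const HG_Ck)

lemma F_x0: "F x0 = 0"
  unfolding F_def using G_zero[OF x0] linear_0[OF Plin] by simp

lemma F_Z: "x \<in> Z \<Longrightarrow> F x \<in> K x0"
  unfolding F_def using G_zero PK by simp

lemma F'_inj0: "inj (F' x0)"
proof -
  have "v = 0" if "F' x0 v = 0" for v
  proof -
    have h: "P v = - HG x0 v" using that unfolding F'_def by (simp add: eq_neg_iff_add_eq_0)
    have "P v \<bullet> P v = - (P v \<bullet> HG x0 v)" by (subst (2) h) simp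
    also have "P v \<bullet> HG x0 v = 0" by (rule HG_orth[OF x0O PK])
    finally have "P v = 0" by simp
    then have "HG x0 v = 0" using h by simp
    then have "v \<in> K x0" using HG_zero_iff[OF x0O] by simp
    then show "v = 0" using Pid \<open>P v = 0\<close> by simp
  qed
  then show ?thesis using F'_lin[OF x0O] linear_injective_0 by blast
qed

definition fb :: "real^'n \<Rightarrow> ((real^'n) \<Rightarrow>\<^sub>L (real^'n))" where "fb x = Blinfun (F' x)"

lemma fb_apply: "x \<in> \<Omega> \<Longrightarrow> blinfun_apply (fb x) = F' x"
  unfolding fb_def using F'_lin bounded_linear_Blinfun_apply linear_conv_bounded_linear by metis

lemma fb_cont: "continuous_on \<Omega> fb"
proof -
  have "continuous (at x within \<Omega>) fb" if x: "x \<in> \<Omega>" for x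
  proof (rule continuous_blinfun_componentwiseI1)
    fix i :: "real^'n" assume "i \<in> Basis"
    have c0: "Ck_on UNIV 0 \<Omega> (\<lambda>x. F' x i)" by (rule Ck_mono[OF F'_Ck]) simp
    have "continuous_on \<Omega> (\<lambda>x. blinfun_apply (fb x) i)"
      using c0 by (simp add: fb_apply cong: continuous_on_cong)
    then show "continuous (at x within \<Omega>) (\<lambda>x. blinfun_apply (fb x) i)"
      using x continuous_on_eq_continuous_within by blast
  qed
  then show ?thesis using continuous_on_eq_continuous_within by blast
qed

lemma IFT:
  obtains U' V g g' where "open U'" "U' \<subseteq> \<Omega>" "x0 \<in> U'" "open V" "F x0 \<in> V" "homeomorphism U' V F g"
    "\<And>y. y \<in> V \<Longrightarrow> (g has_derivative (g' y)) (at y)"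
    "\<And>y. y \<in> V \<Longrightarrow> g' y = inv_into UNIV (F' (g y))"
    "\<And>y. y \<in> V \<Longrightarrow> bij (F' (g y))"
proof -
  obtain gl where gl: "linear gl" "gl \<circ> F' x0 = id"
    using linear_injective_left_inverse[OF F'_lin[OF x0O] F'_inj0] by blast
  define invf where "invf = Blinfun gl"
  have "invf o\<^sub>L fb x0 = id_blinfun"
  proof (rule blinfun_eqI)
    fix i
    have "blinfun_apply invf = gl" unfolding invf_def
      using gl(1) bounded_linear_Blinfun_apply linear_conv_bounded_linear by metis
    then show "blinfun_apply (invf o\<^sub>L fb x0) i = blinfun_apply id_blinfun i"
      using gl(2) fb_apply[OF x0O] by (simp add: fun_eq_iff)
  qed
  from inverse_function_theorem[OF opn _ fb_cont x0O this, of F]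
  obtain U' V g g' where R: "open U'" "U' \<subseteq> \<Omega>" "x0 \<in> U'" "open V" "F x0 \<in> V" "homeomorphism U' V F g"
    "\<And>y. y \<in> V \<Longrightarrow> (g has_derivative (g' y)) (at y)"
    "\<And>y. y \<in> V \<Longrightarrow> g' y = inv_into UNIV (blinfun_apply (fb (g y)))"
    "\<And>y. y \<in> V \<Longrightarrow> bij (blinfun_apply (fb (g y)))"
    using F_deriv fb_apply by metis
  have gU: "g y \<in> \<Omega>" if "y \<in> V" for y
    using R(2,6) that unfolding homeomorphism_def by blast
  show ?thesis
    by (rule that[OF R(1-7)]) (use R(8,9) gU fb_apply in auto)
qed

end



context atP begin

lemma Ginv_Ck:
  assumes U': "open U'" "U' \<subseteq> \<Omega>" and V: "open V" and hom: "homeomorphism U' V F g"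
    and dg: "\<And>y. y \<in> V \<Longrightarrow> (g has_derivative g' y) (at y)"
    and g': "\<And>y. y \<in> V \<Longrightarrow> g' y = inv_into UNIV (F' (g y))"
    and bj: "\<And>y. y \<in> V \<Longrightarrow> bij (F' (g y))"
  shows "Ck_on UNIV (p - 1) V g"
proof -
  have gV: "g ` V = U'" and FU: "F ` U' = V" and gF: "\<And>x. x \<in> U' \<Longrightarrow> g (F x) = x"
    and cg: "continuous_on V g"
    using hom unfolding homeomorphism_def by auto
  have bijU: "bij (F' x)" if x: "x \<in> U'" for x
  proof -
    have "F x \<in> V" using FU x by blast
    then show ?thesis using bj gF[OF x] by metis
  qed
  have detU: "det (matrix (F' x)) \<noteq> 0" if x: "x \<in> U'" for x
    using det_nz_iff_inj[OF F'_lin] bijU[OF x] bij_is_inj x U' by blast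
  have cr: "Ck_on UNIV (p - 2) U' (\<lambda>x. cram (matrix (F' x)) v)" for v
  proof (rule Ck_cram)
    fix i j
    have "Ck_on UNIV (p - 2) \<Omega> (\<lambda>x. F' x (axis j 1) $ i)"
      by (rule Ck_linear[OF bounded_linear_vec_nth F'_Ck])
    then have "Ck_on UNIV (p - 2) U' (\<lambda>x. F' x (axis j 1) $ i)"
      by (rule Ck_restrict) (use U' in auto)
    then show "Ck_on UNIV (p - 2) U' (\<lambda>x. matrix (F' x) $ i $ j)"
      by (simp add: matrix_def)
  next
    fix x assume "x \<in> U'" then show "det (matrix (F' x)) \<noteq> 0" by (rule detU)
  qed
  have gd: "g' y v = cram (matrix (F' (g y))) v" if y: "y \<in> V" for y v
  proof -
    have "g y \<in> \<Omega>" using gV y U' by blast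
    then show ?thesis using g'[OF y] cram_inv[OF F'_lin bj[OF y]] by simp
  qed
  have "j \<le> p - 1 \<Longrightarrow> Ck_on UNIV j V g" for j
  proof (induction j)
    case 0 then show ?case using cg by simp
  next
    case (Suc j)
    then have IH: "Ck_on UNIV j V g" by simp
    have jle: "j \<le> p - 2" using Suc.prems by simp
    have "\<forall>y\<in>V. (g has_derivative g' y) (at y within V)"
      using dg has_derivative_at_withinI by blast
    moreover have "\<forall>v\<in>UNIV. Ck_on UNIV j V (\<lambda>y. g' y v)"
    proof
      fix v :: "real^'n"
      have "Ck_on UNIV j U' (\<lambda>x. cram (matrix (F' x)) v)" by (rule Ck_mono[OF cr jle])
      from Ck_chain[OF IH this U'(1)] gV
      have "Ck_on UNIV j V (\<lambda>y. cram (matrix (F' (g y))) v)" by simp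
      then show "Ck_on UNIV j V (\<lambda>y. g' y v)"
        by (rule Ck_cong) (simp add: gd)
    qed
    ultimately show ?case by (rule CkI2)
  qed
  then show ?thesis by simp
qed

lemma core_atP:
  fixes S :: "(real^'n) set"
  assumes S: "subspace S" and U: "openin (top_of_set S) U" "0 \<in> U"
    and hom: "homeomorphism U (\<phi> ` U) \<phi> \<psi>" and phiU: "\<phi> ` U \<subseteq> Z" and phi0: "\<phi> 0 = x0"
    and dimS: "dim (K x0) \<le> dim S"
  shows "\<exists>A Ob g. is_chart (p - 1) Z x0 (K x0) A Ob g"
proof -
  obtain U' V g g' where R: "open U'" "U' \<subseteq> \<Omega>" "x0 \<in> U'" "open V" "F x0 \<in> V" "homeomorphism U' V F g"
    "\<And>y. y \<in> V \<Longrightarrow> (g has_derivative (g' y)) (at y)"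
    "\<And>y. y \<in> V \<Longrightarrow> g' y = inv_into UNIV (F' (g y))"
    "\<And>y. y \<in> V \<Longrightarrow> bij (F' (g y))"
    using IFT by blast
  have gV: "g ` V = U'" and FU: "F ` U' = V" and gF: "\<And>x. x \<in> U' \<Longrightarrow> g (F x) = x"
    and Fg: "\<And>y. y \<in> V \<Longrightarrow> F (g y) = y" and cF: "continuous_on U' F"
    using R(6) unfolding homeomorphism_def by auto
  have cphi: "continuous_on U \<phi>" and psiphi: "\<And>u. u \<in> U \<Longrightarrow> \<psi> (\<phi> u) = u"
    using hom unfolding homeomorphism_def by auto
  define D where "D = U \<inter> \<phi> -` U'"
  have oD: "openin (top_of_set S) D"
    unfolding D_def using continuous_openin_preimage_gen[OF cphi R(1)] U(1) openin_trans by blast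
  have cD: "continuous_on D (\<lambda>u. F (\<phi> u))"
    by (rule continuous_on_compose2[OF cF continuous_on_subset[OF cphi]]) (auto simp: D_def)
  have mD: "(\<lambda>u. F (\<phi> u)) \<in> D \<rightarrow> K x0" using phiU F_Z by (auto simp: D_def)
  have iD: "inj_on (\<lambda>u. F (\<phi> u)) D"
  proof (rule inj_onI)
    fix u u' assume "u \<in> D" "u' \<in> D" "F (\<phi> u) = F (\<phi> u')"
    then have "\<phi> u = \<phi> u'" using gF by (metis D_def IntD2 vimageE)
    then show "u = u'" using psiphi \<open>u \<in> D\<close> \<open>u' \<in> D\<close> by (metis D_def IntD1)
  qed
  have "openin (top_of_set (K x0)) ((\<lambda>u. F (\<phi> u)) ` D)"
    by (rule invariance_of_domain_subspaces[OF oD S K_subspace[OF x0O] dimS cD mD iD])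
  then obtain Q where Q: "open Q" "(\<lambda>u. F (\<phi> u)) ` D = K x0 \<inter> Q"
    by (auto simp: openin_open)
  define Ob where "Ob = U' \<inter> F -` Q"
  have oO: "open Ob" unfolding Ob_def by (rule continuous_open_preimage[OF cF R(1) Q(1)])
  define A where "A = K x0 \<inter> (V \<inter> Q)"
  have 0: "0 \<in> A"
  proof -
    have "0 \<in> D" using U(2) phi0 R(3) by (simp add: D_def)
    then have "F (\<phi> 0) \<in> Q" using Q(2) by blast
    then show ?thesis using F_x0 phi0 R(5) subspace_0[OF K_subspace[OF x0O]] by (simp add: A_def)
  qed
  have AV: "A \<subseteq> V" by (auto simp: A_def)
  have img: "g ` A = Z \<inter> Ob"
  proof
    show "g ` A \<subseteq> Z \<inter> Ob"
    proof
      fix z assume "z \<in> g ` A"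
      then obtain y where y: "y \<in> A" "z = g y" by blast
      then have "y \<in> (\<lambda>u. F (\<phi> u)) ` D" using Q(2) by (auto simp: A_def)
      then obtain u where u: "u \<in> D" "y = F (\<phi> u)" by blast
      have "\<phi> u \<in> U'" using u by (simp add: D_def)
      then have "z = \<phi> u" using gF u y by simp
      then have "z \<in> Z" using phiU u by (auto simp: D_def)
      moreover have "z \<in> Ob" using y gV AV Fg Q(2) by (auto simp: Ob_def A_def)
      ultimately show "z \<in> Z \<inter> Ob" by blast
    qed
    show "Z \<inter> Ob \<subseteq> g ` A"
    proof
      fix z assume z: "z \<in> Z \<inter> Ob"
      then have "z \<in> U'" "F z \<in> Q" by (auto simp: Ob_def)
      moreover have "F z \<in> K x0" using z F_Z by blast
      moreover have "F z \<in> V" using FU \<open>z \<in> U'\<close> by blast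
      ultimately have "F z \<in> A" by (simp add: A_def)
      then show "z \<in> g ` A" using gF[OF \<open>z \<in> U'\<close>] by (metis image_eqI)
    qed
  qed
  have hA: "homeomorphism A (g ` A) g F"
    using homeomorphism_of_subsets[OF homeomorphism_symD[OF R(6)] AV order_refl] by blast
  have CkA: "Ck_on (K x0) (p - 1) A g"
    using Ck_restrict[OF Ginv_Ck[OF R(1,2,4,6,7,8,9)]] AV by blast
  have g0: "g 0 = x0" using gF[OF R(3)] F_x0 by simp
  have der: "(g has_derivative g' 0) (at 0 within A)"
    using R(7) 0 AV has_derivative_at_withinI by blast
  have injd: "inj_on (g' 0) (K x0)"
  proof -
    have "bij (g' 0)" using R(8,9) 0 AV bij_imp_bij_inv by (metis subsetD)
    then show ?thesis using bij_is_inj inj_on_subset by blast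
  qed
  have "is_chart (p - 1) Z x0 (K x0) A Ob g"
    unfolding is_chart_def
    using K_subspace[OF x0O] oO CkA g0 img hA der injd 0 R(4) Q(1)
    by (auto simp: A_def intro!: openin_open_Int)
  then show ?thesis by blast
qed

end



lemma chart_dim_le:
  fixes S S' :: "'a::euclidean_space set"
  assumes c1: "is_chart k Z x S U V \<phi>" and c2: "is_chart k' Z x' S' U' V' \<phi>'"
    and y: "y \<in> Z \<inter> V \<inter> V'"
  shows "dim S \<le> dim S'"
proof -
  obtain \<psi> where h1: "homeomorphism U (\<phi> ` U) \<phi> \<psi>" using c1 unfolding is_chart_def by blast
  obtain \<psi>' where h2: "homeomorphism U' (\<phi>' ` U') \<phi>' \<psi>'" using c2 unfolding is_chart_def by blast
  have S: "subspace S" "openin (top_of_set S) U" "\<phi> ` U = Z \<inter> V" using c1 unfolding is_chart_def by auto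
  have S': "subspace S'" "U' \<subseteq> S'" "\<phi>' ` U' = Z \<inter> V'" using c2 unfolding is_chart_def by auto
  have cphi: "continuous_on U \<phi>" and psiphi: "\<And>u. u \<in> U \<Longrightarrow> \<psi> (\<phi> u) = u"
    using h1 unfolding homeomorphism_def by auto
  have cpsi': "continuous_on (\<phi>' ` U') \<psi>'" and psi'U: "\<psi>' ` (\<phi>' ` U') = U'"
    and phipsi': "\<And>z. z \<in> \<phi>' ` U' \<Longrightarrow> \<phi>' (\<psi>' z) = z"
    using h2 unfolding homeomorphism_def by auto
  define D where "D = U \<inter> \<phi> -` V'"
  have oD: "openin (top_of_set S) D"
    unfolding D_def using continuous_openin_preimage_gen[OF cphi] c2 S(2) openin_trans
    unfolding is_chart_def by blast
  have phiD: "\<phi> ` D \<subseteq> \<phi>' ` U'" using S(3) S'(3) by (auto simp: D_def)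
  have cD: "continuous_on D (\<lambda>u. \<psi>' (\<phi> u))"
    by (rule continuous_on_compose2[OF cpsi' continuous_on_subset[OF cphi] phiD]) (auto simp: D_def)
  have mD: "(\<lambda>u. \<psi>' (\<phi> u)) ` D \<subseteq> S'" using phiD psi'U S'(2) by blast
  have iD: "inj_on (\<lambda>u. \<psi>' (\<phi> u)) D"
  proof (rule inj_onI)
    fix u u' assume u: "u \<in> D" "u' \<in> D" and e: "\<psi>' (\<phi> u) = \<psi>' (\<phi> u')"
    have "\<phi> u = \<phi>' (\<psi>' (\<phi> u))" using phipsi' phiD u(1) by auto
    also have "\<dots> = \<phi> u'" using e phipsi' phiD u(2) by auto
    finally have "\<phi> u = \<phi> u'" .
    then show "u = u'" using psiphi u by (metis D_def IntD1)
  qed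
  have ne: "D \<noteq> {}"
  proof -
    have "y \<in> \<phi> ` U" using y S(3) by blast
    then obtain u where "u \<in> U" "y = \<phi> u" by blast
    then have "u \<in> D" using y by (simp add: D_def)
    then show ?thesis by blast
  qed
  show ?thesis by (rule invariance_of_dimension_subspaces[OF oD S(1) S'(1) cD mD iD ne])
qed

lemma chart_dim_eq:
  fixes S S' :: "'a::euclidean_space set"
  assumes c1: "is_chart k Z x S U V \<phi>" and c2: "is_chart k' Z x' S' U' V' \<phi>'"
    and y: "y \<in> Z \<inter> V \<inter> V'"
  shows "dim S = dim S'"
  using chart_dim_le[OF c1 c2 y] chart_dim_le[OF c2 c1] y by (simp add: Int_ac le_antisym)

lemma chart_center: "is_chart k Z x S U V \<phi> \<Longrightarrow> x \<in> Z \<inter> V"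
  unfolding is_chart_def by (metis image_eqI)

lemma chart_mono: "is_chart k N x S U V \<phi> \<Longrightarrow> j \<le> k \<Longrightarrow> is_chart j N x S U V \<phi>"
  unfolding is_chart_def using Ck_mono by blast

lemma chart_restrict:
  assumes c: "is_chart k Z y S U V \<phi>" and Ob: "open Ob" "y \<in> Ob"
  shows "is_chart k (Z \<inter> Ob) y S (U \<inter> \<phi> -` Ob) (V \<inter> Ob) \<phi>"
proof -
  obtain \<psi> where h: "homeomorphism U (\<phi> ` U) \<phi> \<psi>" using c unfolding is_chart_def by blast
  obtain \<phi>' where d: "(\<phi> has_derivative \<phi>') (at 0 within U)" "inj_on \<phi>' S"
    using c unfolding is_chart_def by blast
  have cphi: "continuous_on U \<phi>" using h unfolding homeomorphism_def by auto
  have b: "subspace S" "U \<subseteq> S" "openin (top_of_set S) U" "0 \<in> U" "open V" "Ck_on S k U \<phi>" "\<phi> 0 = y"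
    "\<phi> ` U = Z \<inter> V" using c unfolding is_chart_def by auto
  have "openin (top_of_set S) (U \<inter> \<phi> -` Ob)"
    using continuous_openin_preimage_gen[OF cphi Ob(1)] b(3) openin_trans by blast
  moreover have "\<phi> ` (U \<inter> \<phi> -` Ob) = Z \<inter> Ob \<inter> (V \<inter> Ob)"
  proof -
    have "\<phi> ` (U \<inter> \<phi> -` Ob) = \<phi> ` U \<inter> Ob" by auto
    then show ?thesis using b(8) by auto
  qed
  moreover have "homeomorphism (U \<inter> \<phi> -` Ob) (\<phi> ` (U \<inter> \<phi> -` Ob)) \<phi> \<psi>"
    by (rule homeomorphism_of_subsets[OF h _ order_refl]) auto
  moreover have "(\<phi> has_derivative \<phi>') (at 0 within U \<inter> \<phi> -` Ob)"
    using has_derivative_subset[OF d(1)] by blast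
  moreover have "Ck_on S k (U \<inter> \<phi> -` Ob) \<phi>" using Ck_restrict[OF b(6)] by blast
  ultimately show ?thesis unfolding is_chart_def using b d(2) Ob by auto
qed

context fsetup begin

lemma core:
  fixes S :: "(real^'n) set"
  assumes x0: "x0 \<in> Z" and S: "subspace S" and U: "openin (top_of_set S) U" "0 \<in> U"
    and hom: "homeomorphism U (\<phi> ` U) \<phi> \<psi>" and phiU: "\<phi> ` U \<subseteq> Z" and phi0: "\<phi> 0 = x0"
    and dimS: "dim (K x0) \<le> dim S"
  shows "\<exists>A Ob g. is_chart (p - 1) Z x0 (K x0) A Ob g"
proof -
  obtain P where P: "linear P" "\<And>v. P v \<in> K x0" "\<And>k. k \<in> K x0 \<Longrightarrow> P k = k"
    using exists_P x0 Z_sub by blast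
  interpret atP \<Omega> f p Df D2 x0 P
    by (rule atP.intro[OF fsetup_axioms], rule atP_axioms.intro) (use x0 P in auto)
  show ?thesis by (rule core_atP[OF S U hom phiU phi0 dimS])
qed

lemma dimK_from_pos:
  fixes S :: "(real^'n) set"
  assumes x0: "x0 \<in> Z" and c: "is_chart k Z x0 S U V \<phi>"
    and T: "subspace T" "dim T = CARD('n) - dim S" "\<forall>v\<in>T. v \<noteq> 0 \<longrightarrow> d2 f x0 v v > 0"
  shows "dim (K x0) = dim S"
proof -
  have x0O: "x0 \<in> \<Omega>" using x0 Z_sub by blast
  obtain \<phi>' where d: "(\<phi> has_derivative \<phi>') (at 0 within U)" "inj_on \<phi>' S"
    using c unfolding is_chart_def by blast
  have b: "subspace S" "openin (top_of_set S) U" "0 \<in> U" "\<phi> 0 = x0" "\<phi> ` U \<subseteq> Z"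
    using c unfolding is_chart_def by auto
  have le1: "dim S \<le> dim (K x0)" by (rule dim_le_K[OF x0 b(1-3) b(5) b(4) d])
  have TK: "T \<inter> K x0 = {0}"
  proof -
    have "v = 0" if "v \<in> T" "v \<in> K x0" for v
    proof (rule ccontr)
      assume "v \<noteq> 0"
      then have "d2 f x0 v v > 0" using T(3) that by blast
      moreover have "d2 f x0 v v = 0" using that(2) d2_eq[OF x0O] by (simp add: K_def)
      ultimately show False by simp
    qed
    then show ?thesis using subspace_0[OF T(1)] subspace_0[OF K_subspace[OF x0O]] by blast
  qed
  have "dim {x + y |x y. x \<in> T \<and> y \<in> K x0} + dim (T \<inter> K x0) = dim T + dim (K x0)"
    by (rule dim_sums_Int[OF T(1) K_subspace[OF x0O]])
  moreover have "dim (T \<inter> K x0) = 0" using TK by simp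
  moreover have "dim {x + y |x y. x \<in> T \<and> y \<in> K x0} \<le> CARD('n)"
    using dim_subset_UNIV[of "{x + y |x y. x \<in> T \<and> y \<in> K x0}"] by simp
  moreover have "dim S \<le> CARD('n)" using dim_subset_UNIV[of S] by simp
  ultimately show ?thesis using le1 T(2) by linarith
qed

definition CA :: bool where
  "CA \<longleftrightarrow> (\<forall>x0\<in>Z. \<exists>S U V \<phi>. is_chart (p - 1) Z x0 S U V \<phi> \<and> dim S = dim (K x0))"

lemma CA_pn: assumes CA shows "positive_normally k f Z"
  unfolding positive_normally_def
proof (intro conjI ballI allI impI)
  fix x assume "x \<in> Z" then show "(f has_derivative (\<lambda>v. 0)) (at x)" by (rule f_deriv_zero)
next
  fix x0 d0 assume x0: "x0 \<in> Z" and ld: "local_dim_is k Z x0 d0"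
  have x0O: "x0 \<in> \<Omega>" using x0 Z_sub by blast
  obtain S U V \<phi> where c: "is_chart (p - 1) Z x0 S U V \<phi>" "dim S = dim (K x0)"
    using assms x0 unfolding CA_def by blast
  obtain S' U' V' \<phi>' where c': "is_chart k Z x0 S' U' V' \<phi>'" "dim S' = d0"
    using ld unfolding local_dim_is_def by blast
  have "x0 \<in> Z \<inter> V \<inter> V'" using chart_center[OF c(1)] chart_center[OF c'(1)] by blast
  then have "d0 = dim (K x0)" using chart_dim_eq[OF c(1) c'(1)] c c' by simp
  moreover have "dim (W x0) = CARD('n) - dim (K x0)" using dim_W[OF x0O] by simp
  moreover have "\<forall>v\<in>W x0. v \<noteq> 0 \<longrightarrow> d2 f x0 v v > 0" using PD[OF x0] d2_eq[OF x0O] by simp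
  ultimately show "\<exists>T. subspace T \<and> dim T = DIM(real^'n) - d0 \<and> (\<forall>v\<in>T. v \<noteq> 0 \<longrightarrow> d2 f x0 v v > 0)"
    using W_subspace by auto
qed

lemma CA_sub: assumes CA shows "submanifold (p - 1) Z"
  using assms unfolding CA_def submanifold_def by blast

lemma CA_sub1: assumes CA shows "submanifold 1 Z"
proof -
  have "p - 1 \<ge> 1" using p2 by simp
  then show ?thesis using assms chart_mono unfolding CA_def submanifold_def by meson
qed

lemma PN_CA:
  assumes sm: "submanifold k Z" and pn: "positive_normally k f Z"
  shows CA
  unfolding CA_def
proof
  fix x0 assume x0: "x0 \<in> Z"
  obtain S U V \<phi> where c: "is_chart k Z x0 S U V \<phi>" using sm x0 unfolding submanifold_def by blast
  have "local_dim_is k Z x0 (dim S)" using c unfolding local_dim_is_def by blast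
  then have "\<exists>T. subspace T \<and> dim T = DIM(real^'n) - dim S \<and> (\<forall>v\<in>T. v \<noteq> 0 \<longrightarrow> d2 f x0 v v > 0)"
    using pn x0 unfolding positive_normally_def by blast
  then obtain T where T: "subspace T" "dim T = CARD('n) - dim S" "\<forall>v\<in>T. v \<noteq> 0 \<longrightarrow> d2 f x0 v v > 0"
    by auto
  have dK: "dim (K x0) = dim S" by (rule dimK_from_pos[OF x0 c T])
  obtain \<psi> where h: "homeomorphism U (\<phi> ` U) \<phi> \<psi>" using c unfolding is_chart_def by blast
  have b: "subspace S" "openin (top_of_set S) U" "0 \<in> U" "\<phi> 0 = x0" "\<phi> ` U \<subseteq> Z"
    using c unfolding is_chart_def by auto
  obtain A Ob g where "is_chart (p - 1) Z x0 (K x0) A Ob g"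
    using core[OF x0 b(1-3) h b(5) b(4)] dK by auto
  then show "\<exists>S U V \<phi>. is_chart (p - 1) Z x0 S U V \<phi> \<and> dim S = dim (K x0)" by blast
qed

lemma NH_CA:
  assumes nh: "\<forall>x0\<in>Z. normal_hessian_at \<Omega> f x0"
  shows CA
  unfolding CA_def
proof
  fix x0 assume x0: "x0 \<in> Z"
  have x0O: "x0 \<in> \<Omega>" using x0 Z_sub by blast
  obtain d0 k N where N: "d0 \<le> CARD('n)" "k \<ge> 1" "submanifold k N" "\<forall>y\<in>N. local_dim_is k N y d0"
    "x0 \<in> N" "N \<subseteq> Z" "rank (hessian f x0) = CARD('n) - d0"
    using nh x0 unfolding normal_hessian_at_def by blast
  obtain S U V \<phi> where c: "is_chart k N x0 S U V \<phi>" "dim S = d0"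
    using N(4,5) unfolding local_dim_is_def by blast
  have "dim (K x0) \<le> CARD('n)" using dim_subset_UNIV[of "K x0"] by simp
  then have dK: "dim (K x0) = d0" using rank_hessian[OF x0O] N(1,7) by linarith
  obtain \<psi> where h: "homeomorphism U (\<phi> ` U) \<phi> \<psi>" using c unfolding is_chart_def by blast
  have b: "subspace S" "openin (top_of_set S) U" "0 \<in> U" "\<phi> 0 = x0" "\<phi> ` U \<subseteq> Z"
    using c N(6) unfolding is_chart_def by auto
  obtain A Ob g where "is_chart (p - 1) Z x0 (K x0) A Ob g"
    using core[OF x0 b(1-3) h b(5) b(4)] dK c(2) by auto
  then show "\<exists>S U V \<phi>. is_chart (p - 1) Z x0 S U V \<phi> \<and> dim S = dim (K x0)" by blast
qed

lemma CA_NH: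
  assumes ca: CA
  shows "\<forall>x0\<in>Z. normal_hessian_at \<Omega> f x0"
proof
  fix x0 assume x0: "x0 \<in> Z"
  have x0O: "x0 \<in> \<Omega>" using x0 Z_sub by blast
  obtain S U V \<phi> where c: "is_chart (p - 1) Z x0 S U V \<phi>" "dim S = dim (K x0)"
    using ca x0 unfolding CA_def by blast
  define N where "N = Z \<inter> V"
  have oV: "open V" using c unfolding is_chart_def by blast
  have loc: "local_dim_is (p - 1) N y (dim S)" if y: "y \<in> N" for y
  proof -
    have yZ: "y \<in> Z" using y by (simp add: N_def)
    obtain S' U' V' \<phi>' where c': "is_chart (p - 1) Z y S' U' V' \<phi>'"
      using ca yZ unfolding CA_def by blast
    have "y \<in> Z \<inter> V' \<inter> V" using chart_center[OF c'] y by (auto simp: N_def)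
    then have dS: "dim S' = dim S" using chart_dim_eq[OF c' c(1)] by blast
    have "y \<in> V" using y by (simp add: N_def)
    from chart_restrict[OF c' oV this]
    show ?thesis unfolding local_dim_is_def N_def using dS by blast
  qed
  have "submanifold (p - 1) N" unfolding submanifold_def using loc unfolding local_dim_is_def by blast
  moreover have "x0 \<in> N" using chart_center[OF c(1)] by (simp add: N_def)
  moreover have "dim S \<le> CARD('n)" using dim_subset_UNIV[of S] by simp
  moreover have "rank (hessian f x0) = CARD('n) - dim S" using rank_hessian[OF x0O] c(2) by simp
  moreover have "p - 1 \<ge> 1" using p2 by simp
  ultimately show "normal_hessian_at \<Omega> f x0"
    unfolding normal_hessian_at_def using loc by (auto simp: N_def)
qed

lemma main:
  "((\<forall>x0\<in>Z. normal_hessian_at \<Omega> f x0) \<longleftrightarrow> (submanifold 1 Z \<and> positive_normally 1 f Z))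
   \<and> ((submanifold 1 Z \<and> positive_normally 1 f Z) \<longleftrightarrow> (submanifold (p - 1) Z \<and> positive_normally (p - 1) f Z))"
  using CA_NH NH_CA CA_pn CA_sub CA_sub1 PN_CA by meson

end

lemma derive_setup:
  fixes \<Omega> :: "(real^'n) set" and f :: "real^'n \<Rightarrow> real" and p :: nat
  assumes "p \<ge> 2" and "open \<Omega>" and "\<forall>x\<in>\<Omega>. f x \<ge> 0" and Ck: "Ck_on UNIV p \<Omega> f"
  shows "\<exists>Df D2. fsetup \<Omega> f p Df D2"
proof -
  obtain q where q: "p = Suc (Suc q)" using assms(1) by (metis add_2_eq_Suc le_Suc_ex)
  obtain Df where d: "\<forall>x\<in>\<Omega>. (f has_derivative Df x) (at x within \<Omega>)"
    and c: "\<forall>v\<in>UNIV. Ck_on UNIV (Suc q) \<Omega> (\<lambda>x. Df x v)"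
    using Ck unfolding q by auto
  have "\<forall>v. \<exists>g'. (\<forall>x\<in>\<Omega>. ((\<lambda>x. Df x v) has_derivative g' x) (at x within \<Omega>)) \<and>
          (\<forall>w\<in>UNIV. Ck_on UNIV q \<Omega> (\<lambda>x. g' x w))"
    using c by simp
  then obtain D2 where D2: "\<And>v. \<forall>x\<in>\<Omega>. ((\<lambda>x. Df x v) has_derivative D2 v x) (at x within \<Omega>)"
    and D2c: "\<And>v. \<forall>w\<in>UNIV. Ck_on UNIV q \<Omega> (\<lambda>x. D2 v x w)"
    by metis
  have "fsetup \<Omega> f p Df D2"
  proof
    show "2 \<le> p" "open \<Omega>" "\<forall>x\<in>\<Omega>. 0 \<le> f x" using assms by auto
    show "(f has_derivative Df x) (at x)" if "x \<in> \<Omega>" for x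
      using d that at_within_open[OF that assms(2)] by metis
    show "Ck_on UNIV (p - 1) \<Omega> (\<lambda>x. Df x v)" for v using c q by simp
    show "((\<lambda>x. Df x v) has_derivative D2 v x) (at x)" if "x \<in> \<Omega>" for v x
      using D2 that at_within_open[OF that assms(2)] by metis
    show "continuous_on \<Omega> (\<lambda>x. D2 v x w)" for v w
    proof -
      have "Ck_on UNIV q \<Omega> (\<lambda>x. D2 v x w)" using D2c by blast
      from Ck_mono[OF this, of 0] show ?thesis by simp
    qed
  qed
  then show ?thesis by blast
qed

theorem lemma2p7:
  fixes \<Omega> :: "(real^'n) set" and f :: "real^'n \<Rightarrow> real" and p :: nat
  assumes "p \<ge> 2" and "open \<Omega>" and "\<forall>x\<in>\<Omega>. f x \<ge> 0" and "Ck_on UNIV p \<Omega> f"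
  shows "((\<forall>x0\<in>zero_set \<Omega> f. normal_hessian_at \<Omega> f x0) \<longleftrightarrow>
            (submanifold 1 (zero_set \<Omega> f) \<and> positive_normally 1 f (zero_set \<Omega> f)))
       \<and> ((submanifold 1 (zero_set \<Omega> f) \<and> positive_normally 1 f (zero_set \<Omega> f)) \<longleftrightarrow>
            (submanifold (p - 1) (zero_set \<Omega> f) \<and> positive_normally (p - 1) f (zero_set \<Omega> f)))"
proof -
  obtain Df D2 where "fsetup \<Omega> f p Df D2" using derive_setup[OF assms] by blast
  then interpret fsetup \<Omega> f p Df D2 .
  show ?thesis by (rule main)
qed


end
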